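(* For $\ell\in\mathbb N_0$ and $z>1$ let $\phi_\ell(z)=\int_{-1}^1\frac{P_\ell(y)}{y+z}dy$. Then: (i) for every $z>1$, $\phi_1(z)<\phi_3(z)<\phi_5(z)<\dots<0$; (ii) for odd $\ell$, $z\mapsto\phi_\ell(z)$ is smooth and strictly increasing on $(1,\infty)$, and $\phi_\ell(z)=-\frac{2^{-\ell}\int_{-1}^1(1-y^2)^\ell dy}{(z-1)^{\ell+1}}(1+o(1))$ as $z\to+\infty$; (iii) for odd $\ell$, $|\phi_\ell(z)|\leqslant\frac{2^{-\ell}\int_{-1}^1(1-y^2)^\ell dy}{(z-1)^{\ell+1}}$ for all $z>1$, and $|\phi_\ell(z)|\leqslant\frac{C_\ell\,2^{-\ell}\int_{-1}^1(1-y^2)^\ell dy}{z^{\ell+1}}$ for all $z>1+m^*$, where $C_\ell=\frac{2^\ell(1+m^* )^{\ell+1}\int_{-1}^1\frac{-P_\ell(y)}{y+1+m^*}dy}{\int_{-1}^1(1-y^2)^\ell dy}$.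
   Context: $P_\ell(y)=\frac{1}{2^\ell\ell!}\frac{d^\ell}{dy^\ell}(y^2-1)^\ell$ is the $\ell$-th Legendre polynomial. $m^*>0$ is the unique root of $\Lambda(m)=1$, where $\Lambda(m)=\frac{2}{\pi}(m+1)^2\big(\frac{1}{\sqrt{m(m+2)}}-\arcsin\frac{1}{m+1}\big)$ (numerically $m^*\approx(13.607)^{-1}$). *)

theory Defs
  imports "HOL-Analysis.Analysis" "HOL-Computational_Algebra.Polynomial" "HOL-Library.Landau_Symbols"
begin

definition legendre_poly :: "nat \<Rightarrow> real poly" where
  "legendre_poly l = smult (1 / (2 ^ l * fact l)) ((pderiv ^^ l) ([:-1, 0, 1:] ^ l))"

definition legendre :: "nat \<Rightarrow> real \<Rightarrow> real" where
  "legendre l y = poly (legendre_poly l) y"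

definition phi :: "nat \<Rightarrow> real \<Rightarrow> real" where
  "phi l z = integral {-1..1} (\<lambda>y. legendre l y / (y + z))"

definition Lambda :: "real \<Rightarrow> real" where
  "Lambda m = 2 / pi * (m + 1)^2 * (1 / sqrt (m * (m + 2)) - arcsin (1 / (m + 1)))"

text \<open>m* : the unique positive root of Lambda(m) = 1.\<close>
definition mstar :: real where
  "mstar = (THE m. m > 0 \<and> Lambda m = 1)"

definition smooth_on :: "real set \<Rightarrow> (real \<Rightarrow> real) \<Rightarrow> bool" where
  "smooth_on S f \<longleftrightarrow>
     (\<forall>k. \<forall>x\<in>S. ((deriv ^^ k) f has_real_derivative (deriv ^^ Suc k) f x) (at x))"

definition Anorm :: "nat \<Rightarrow> real" where
  "Anorm l = 2 powr (- real l) * integral {-1..1} (\<lambda>y. (1 - y^2) ^ l)"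

definition Cconst :: "nat \<Rightarrow> real" where
  "Cconst l = 2 ^ l * (1 + mstar) ^ (l + 1) * integral {-1..1} (\<lambda>y. - legendre l y / (y + 1 + mstar))
              / integral {-1..1} (\<lambda>y. (1 - y^2) ^ l)"

end

theory Submission
  imports Defs "HOL-Real_Asymp.Real_Asymp"
begin

abbreviation QQ :: "real poly" where "QQ \<equiv> [:-1, 0, 1:]"

lemma pderiv_div: "j \<le> l \<Longrightarrow> \<exists>s. (pderiv ^^ j) (QQ ^ l) = QQ ^ (l - j) * s"
proof (induction j)
  case 0 then show ?case by (intro exI[of _ 1]) simp
next
  case (Suc j)
  then obtain s where s: "(pderiv ^^ j) (QQ ^ l) = QQ ^ (l - j) * s" by auto
  obtain n where n: "l - j = Suc n" "l - Suc j = n" using Suc.prems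
    by (metis Suc_diff_Suc Suc_le_lessD diff_Suc_1)
  have "(pderiv ^^ Suc j) (QQ ^ l) = pderiv (QQ ^ Suc n * s)" using s n by simp
  also have "\<dots> = QQ ^ n * (QQ * pderiv s + smult (of_nat (Suc n)) (s * pderiv QQ))"
    by (simp only: pderiv_mult pderiv_power_Suc) (simp add: algebra_simps)
  finally show ?case using n by blast
qed

lemma pderiv_vanish:
  assumes "j < l" shows "poly ((pderiv ^^ j) (QQ ^ l)) 1 = 0" "poly ((pderiv ^^ j) (QQ ^ l)) (-1) = 0"
proof -
  obtain s where s: "(pderiv ^^ j) (QQ ^ l) = QQ ^ (l - j) * s" using pderiv_div assms by fastforce
  have "l - j \<noteq> 0" using assms by simp
  then show "poly ((pderiv ^^ j) (QQ ^ l)) 1 = 0" "poly ((pderiv ^^ j) (QQ ^ l)) (-1) = 0"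
    using s by (simp_all add: zero_power)
qed



lemma quot_alg:
  fixes w A B :: real
  assumes "w \<noteq> 0"
  shows "(A * w^(k+1) - B * (of_nat (k+1) * (1 * w^(k+1 - Suc 0)))) / (w^(k+1) * w^(k+1))
       = A / w^(k+1) - (real k + 1) * (B / w^(k+2))"
proof -
  have a: "w^k \<noteq> 0" using assms by simp
  have e: "w^(k+1) = w^k * w" "w^(k+2) = w^k * w * w" "k + 1 - Suc 0 = k" by (simp_all add: power_Suc2 power_add)
  show ?thesis unfolding e using a assms by (simp add: field_simps)
qed

lemma ibp_step:
  fixes z :: real and p :: "real poly"
  assumes z: "z > 1" and p1: "poly p 1 = 0" and pm1: "poly p (-1) = 0"
  shows "integral {-1..1} (\<lambda>y. poly (pderiv p) y / (y+z)^(k+1))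
       = (real k + 1) * integral {-1..1} (\<lambda>y. poly p y / (y+z)^(k+2))"
proof -
  define F where "F y = poly p y / (y+z)^(k+1)" for y
  define F' where "F' y = poly (pderiv p) y / (y+z)^(k+1) - (real k + 1) * (poly p y / (y+z)^(k+2))" for y
  have pos: "y \<in> {-1..1} \<Longrightarrow> y + z > 0" for y using z by auto
  have "(F' has_integral F 1 - F (-1)) {-1..1}"
  proof (rule fundamental_theorem_of_calculus)
    fix y :: real assume y: "y \<in> {-1..1}"
    have ne: "y + z \<noteq> 0" using pos[OF y] by simp
    have dz: "((\<lambda>y. y + z) has_real_derivative 1) (at y)"
      by (auto intro!: derivative_eq_intros)
    have "(F has_real_derivative
        (poly (pderiv p) y * (y+z)^(k+1) - poly p y * (of_nat (k+1) * (1 * (y+z)^(k+1 - Suc 0))))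
          / ((y+z)^(k+1) * (y+z)^(k+1))) (at y)"
      unfolding F_def
      by (rule DERIV_divide[OF poly_DERIV DERIV_power[OF dz]]) (use ne in simp)
    moreover have "(poly (pderiv p) y * (y+z)^(k+1) - poly p y * (of_nat (k+1) * (1 * (y+z)^(k+1 - Suc 0))))
          / ((y+z)^(k+1) * (y+z)^(k+1)) = F' y"
      unfolding F'_def using quot_alg[OF ne, of _ k] by simp
    ultimately have "(F has_real_derivative F' y) (at y)" by simp
    then show "(F has_vector_derivative F' y) (at y within {-1..1})"
      using has_real_derivative_iff_has_vector_derivative has_field_derivative_at_within by blast
  qed simp
  then have I: "(F' has_integral 0) {-1..1}" using p1 pm1 by (simp add: F_def)
  have c1: "continuous_on {-1..1} (\<lambda>y. poly (pderiv p) y / (y+z)^(k+1))"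
    by (intro continuous_intros) (use pos in fastforce)+
  have c2: "continuous_on {-1..1} (\<lambda>y. (real k + 1) * (poly p y / (y+z)^(k+2)))"
    by (intro continuous_intros) (use pos in fastforce)+
  have "integral {-1..1} F' = integral {-1..1} (\<lambda>y. poly (pderiv p) y / (y+z)^(k+1))
        - integral {-1..1} (\<lambda>y. (real k + 1) * (poly p y / (y+z)^(k+2)))"
    unfolding F'_def
    by (rule integral_diff) (use c1 c2 integrable_continuous_interval in auto)
  moreover have "integral {-1..1} F' = 0" using I by (rule integral_unique)
  ultimately show ?thesis
    using integral_mult_right[of "{-1..1}" "real k + 1" "\<lambda>y. poly p y / (y+z)^(k+2)"] by linarith
qed

lemma ibp_iter:
  assumes z: "z > 1"
  shows "k \<le> l \<Longrightarrow> integral {-1..1} (\<lambda>y. poly ((pderiv^^l)(QQ^l)) y / (y+z))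
     = fact k * integral {-1..1} (\<lambda>y. poly ((pderiv^^(l-k))(QQ^l)) y / (y+z)^(k+1))"
proof (induction k)
  case 0 then show ?case by simp
next
  case (Suc k)
  define p where "p = (pderiv^^(l - Suc k))(QQ^l)"
  have lk: "l - k = Suc (l - Suc k)" using Suc.prems by simp
  have pp: "(pderiv^^(l-k))(QQ^l) = pderiv p" unfolding p_def lk by simp
  have v: "poly p 1 = 0" "poly p (-1) = 0" unfolding p_def using pderiv_vanish[of "l - Suc k" l] Suc.prems by auto
  have "integral {-1..1} (\<lambda>y. poly ((pderiv^^l)(QQ^l)) y / (y+z))
      = fact k * integral {-1..1} (\<lambda>y. poly (pderiv p) y / (y+z)^(k+1))"
    using Suc by (simp add: pp)
  also have "\<dots> = fact k * ((real k + 1) * integral {-1..1} (\<lambda>y. poly p y / (y+z)^(k+2)))"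
    using ibp_step[OF z v] by simp
  also have "\<dots> = fact (Suc k) * integral {-1..1} (\<lambda>y. poly p y / (y+z)^(Suc k+1))"
    by (simp add: algebra_simps)
  finally show ?case unfolding p_def .
qed

lemma phi_repr:
  assumes z: "z > 1"
  shows "phi l z = integral {-1..1} (\<lambda>y. (y*y - 1)^l / (y+z)^(l+1)) / 2^l"
proof -
  have "phi l z = integral {-1..1} (\<lambda>y. poly ((pderiv^^l)(QQ^l)) y / (y+z) / (2 ^ l * fact l))"
    unfolding phi_def legendre_def legendre_poly_def by (simp add: field_simps)
  also have "\<dots> = integral {-1..1} (\<lambda>y. poly ((pderiv^^l)(QQ^l)) y / (y+z)) / (2 ^ l * fact l)"
    by (rule integral_divide)
  also have "\<dots> = fact l * integral {-1..1} (\<lambda>y. poly (QQ^l) y / (y+z)^(l+1)) / (2 ^ l * fact l)"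
    using ibp_iter[OF z, of l l] by (simp only: diff_self_eq_0 funpow_0 order_refl)
  also have "\<dots> = integral {-1..1} (\<lambda>y. poly (QQ^l) y / (y+z)^(l+1)) / 2^l"
    by simp
  also have "(\<lambda>y. poly (QQ^l) y / (y+z)^(l+1)) = (\<lambda>y. (y*y - 1)^l / (y+z)^(l+1))"
    by (simp add: poly_power algebra_simps)
  finally show ?thesis .
qed

definition BB :: "nat \<Rightarrow> real \<Rightarrow> real" where
  "BB l z = integral {-1..1} (\<lambda>y. (1 - y^2)^l / (y+z)^(l+1))"

definition II :: "nat \<Rightarrow> real" where
  "II l = integral {-1..1} (\<lambda>y. (1 - y^2)^l)"

lemma phi_BB:
  assumes z: "z > 1" and l: "odd l"
  shows "phi l z = - BB l z / 2^l"
proof -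
  have "(\<lambda>y. (y*y - 1)^l / (y+z)^(l+1)) = (\<lambda>y. - ((1 - y^2)^l / (y+z)^(l+1)))"
  proof
    fix y :: real
    have "(y*y - 1)^l = (-(1 - y^2))^l" by (simp add: power2_eq_square)
    also have "\<dots> = -((1 - y^2)^l)" by (rule power_minus_odd[OF l])
    finally show "(y*y - 1)^l / (y+z)^(l+1) = - ((1 - y^2)^l / (y+z)^(l+1))" by simp
  qed
  then show ?thesis using phi_repr[OF z, of l] unfolding BB_def by simp
qed

lemma cont_int: "z > 1 \<Longrightarrow> continuous_on {-1..1} (\<lambda>y::real. (1-y^2)^n / (y+z)^m)"
  by (intro continuous_intros) (auto simp: add_pos_pos)

lemma int_int: "z > 1 \<Longrightarrow> (\<lambda>y::real. (1-y^2)^n / (y+z)^m) integrable_on {-1..1}"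
  using cont_int integrable_continuous_interval by blast

lemma open_facts: "y \<in> {-1<..<1::real} \<Longrightarrow> z > 1 \<Longrightarrow> 1 - y^2 > 0 \<and> y + z > 0 \<and> 1 - y^2 < 2 * (y + z)"
proof -
  assume y: "y \<in> {-1<..<1::real}" and z: "z > 1"
  have "1 - y^2 = (1-y)*(1+y)" by (simp add: power2_eq_square algebra_simps)
  moreover have "(1-y)*(1+y) < 2 * (1+y)" using y by (intro mult_strict_right_mono) auto
  moreover have "(1-y)*(1+y) > 0" using y by auto
  ultimately show ?thesis using z y by auto
qed

lemma closed_facts: "y \<in> {-1..1::real} \<Longrightarrow> z > 1 \<Longrightarrow> 1 - y^2 \<ge> 0 \<and> y + z > 0"
proof -
  assume y: "y \<in> {-1..1::real}" and z: "z > 1"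
  have "1 - y^2 = (1-y)*(1+y)" by (simp add: power2_eq_square algebra_simps)
  moreover have "(1-y)*(1+y) \<ge> 0" using y by auto
  ultimately show ?thesis using z y by auto
qed

lemma BB_pos: "z > 1 \<Longrightarrow> BB l z > 0"
proof -
  assume z: "z > 1"
  have "integral {-1..1} (\<lambda>y::real. 0) < BB l z"
    unfolding BB_def
    by (rule integral_less_real[OF continuous_on_const cont_int[OF z]]) (use open_facts[OF _ z] in auto)
  then show ?thesis by simp
qed

lemma II_pos: "II l > 0"
proof -
  have "integral {-1..1} (\<lambda>y::real. 0) < II l"
    unfolding II_def
    by (rule integral_less_real) (use open_facts[of _ 2] in \<open>auto intro!: continuous_intros\<close>)
  then show ?thesis by simp
qed

lemma step_pt:
  fixes a w :: real
  assumes a: "a > 0" and w: "w > 0" and aw: "a < 2 * w"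
  shows "a^(l+2) / w^(l+2+1) / 4 < a^l / w^(l+1)"
proof -
  have "a * a < (2*w) * (2*w)" using a aw by (intro mult_strict_mono) auto
  then have q: "(a*a)/(4*(w*w)) < 1" using w by (simp add: field_simps)
  have p: "a^l / w^(l+1) > 0" using a w by simp
  have e1: "a^(l+2) = a^l*(a*a)" "w^(l+2+1) = w^(l+1)*(w*w)" by (simp_all add: power_add power2_eq_square)
  have "w^(l+1) > 0" "w*w > 0" using w by auto
  then have "a^(l+2) / w^(l+2+1) / 4 = a^l / w^(l+1) * ((a*a)/(4*(w*w)))"
    unfolding e1 by (simp add: field_simps)
  also have "\<dots> < a^l / w^(l+1) * 1" by (rule mult_strict_left_mono[OF q p])
  finally show ?thesis by simp
qed

lemma BB_step: "z > 1 \<Longrightarrow> BB (l+2) z / 4 < BB l z"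
proof -
  assume z: "z > 1"
  have "integral {-1..1} (\<lambda>y. (1 - y^2)^(l+2) / (y+z)^(l+2+1) / 4) < BB l z"
    unfolding BB_def
  proof (rule integral_less_real)
    show "continuous_on {-1..1} (\<lambda>y. (1 - y^2)^(l+2) / (y+z)^(l+2+1) / 4)"
      by (rule continuous_on_divide[OF cont_int[OF z] continuous_on_const]) simp
  next
    show "continuous_on {-1..1} (\<lambda>y. (1 - y^2)^l / (y+z)^(l+1))" by (rule cont_int[OF z])
  next
    fix y :: real assume y: "y \<in> {-1<..<1}"
    show "(1 - y^2)^(l+2) / (y+z)^(l+2+1) / 4 < (1 - y^2)^l / (y+z)^(l+1)"
      using open_facts[OF y z] by (intro step_pt) auto
  qed simp
  then show ?thesis unfolding BB_def
    using integral_divide[of "{-1..1}" "\<lambda>y. (1 - y^2)^(l+2) / (y+z)^(l+2+1)" 4] by linarith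
qed

lemma BB_mono: "1 < z1 \<Longrightarrow> z1 < z2 \<Longrightarrow> BB l z2 < BB l z1"
proof -
  assume z: "1 < z1" "z1 < z2"
  show ?thesis
    unfolding BB_def
  proof (rule integral_less_real)
    fix y assume y: "y \<in> {-1<..<1::real}"
    have f: "1 - y^2 > 0" "y + z1 > 0" using open_facts[OF y z(1)] by auto
    have lt: "(y+z1)^(l+1) < (y+z2)^(l+1)" using f z by (intro power_strict_mono) auto
    have p1: "(y+z1)^(l+1) > 0" "(y+z2)^(l+1) > 0" "(1 - y^2)^l > 0" using f z by auto
    show "(1 - y^2)^l / (y+z2)^(l+1) < (1 - y^2)^l / (y+z1)^(l+1)"
      by (rule divide_strict_left_mono[OF lt p1(3) mult_pos_pos[OF p1(2) p1(1)]])
  qed ((rule cont_int; use z in linarith) | simp)+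
qed

lemma BB_upper: "z > 1 \<Longrightarrow> BB l z \<le> II l / (z-1)^(l+1)"
proof -
  assume z: "z > 1"
  have "BB l z \<le> integral {-1..1} (\<lambda>y. (1 - y^2)^l / (z-1)^(l+1))"
    unfolding BB_def
  proof (rule integral_le)
    fix y assume y: "y \<in> {-1..1::real}"
    have f: "1 - y^2 \<ge> 0" "y + z > 0" using closed_facts[OF y z] by auto
    have "(z-1)^(l+1) \<le> (y+z)^(l+1)" using y z by (intro power_mono) auto
    then show "(1 - y^2)^l / (y+z)^(l+1) \<le> (1 - y^2)^l / (z-1)^(l+1)"
      using f z by (intro divide_left_mono) auto
  qed (use int_int z in \<open>auto intro!: integrable_continuous_interval continuous_intros\<close>)
  then show ?thesis unfolding II_def by simp
qed

lemma BB_lower: "z > 1 \<Longrightarrow> II l / (z+1)^(l+1) \<le> BB l z"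
proof -
  assume z: "z > 1"
  have "integral {-1..1} (\<lambda>y. (1 - y^2)^l / (z+1)^(l+1)) \<le> BB l z"
    unfolding BB_def
  proof (rule integral_le)
    fix y assume y: "y \<in> {-1..1::real}"
    have f: "1 - y^2 \<ge> 0" "y + z > 0" using closed_facts[OF y z] by auto
    have "(y+z)^(l+1) \<le> (z+1)^(l+1)" using y f by (intro power_mono) auto
    then show "(1 - y^2)^l / (z+1)^(l+1) \<le> (1 - y^2)^l / (y+z)^(l+1)"
      using f z by (intro divide_left_mono) auto
  qed (use int_int z in \<open>auto intro!: integrable_continuous_interval continuous_intros\<close>)
  then show ?thesis unfolding II_def by simp
qed

definition gg :: "nat \<Rightarrow> real \<Rightarrow> real" where
  "gg m x = inverse ((1+x)^Suc m) + inverse ((1-x)^Suc m)"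

lemma gg_even: "gg m (-x) = gg m x"
  unfolding gg_def by simp

lemma inv_alg: "p > 0 \<Longrightarrow> inverse (p^Suc m) * (real (Suc m) * (1 * p^(Suc m - Suc 0))) * inverse (p^Suc m)
   = real (Suc m) / p^(Suc (Suc m))"
  for p :: real by (simp add: field_simps)

lemma inv_alg2: "p > 0 \<Longrightarrow> inverse (p^Suc m) * (real (Suc m) * (-1 * p^(Suc m - Suc 0))) * inverse (p^Suc m)
   = - (real (Suc m) / p^(Suc (Suc m)))"
  for p :: real by (simp add: field_simps)

lemma gg_mono:
  assumes "0 \<le> x" "x \<le> x'" "x' < 1"
  shows "gg m x \<le> gg m x'"
proof (rule DERIV_nonneg_imp_nondecreasing[OF assms(2)])
  fix t assume t: "x \<le> t" "t \<le> x'"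
  have tp: "1 + t > 0" "1 - t > 0" using t assms by auto
  have dz1: "((\<lambda>t. 1 + t) has_real_derivative 1) (at t)" by (auto intro!: derivative_eq_intros)
  have dz2: "((\<lambda>t. 1 - t) has_real_derivative -1) (at t)" by (auto intro!: derivative_eq_intros)
  have d1: "((\<lambda>t. inverse ((1+t)^Suc m)) has_real_derivative
      - (inverse ((1+t)^Suc m) * (real (Suc m) * (1 * (1+t)^(Suc m - Suc 0))) * inverse ((1+t)^Suc m))) (at t)"
    by (rule DERIV_inverse'[OF DERIV_power[OF dz1]]) (use tp in simp)
  have d2: "((\<lambda>t. inverse ((1-t)^Suc m)) has_real_derivative
      - (inverse ((1-t)^Suc m) * (real (Suc m) * (-1 * (1-t)^(Suc m - Suc 0))) * inverse ((1-t)^Suc m))) (at t)"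
    by (rule DERIV_inverse'[OF DERIV_power[OF dz2]]) (use tp in simp)
  have "(gg m has_real_derivative
      (- (real (Suc m) / (1+t)^(Suc (Suc m)))) + (real (Suc m) / (1-t)^(Suc (Suc m)))) (at t)"
    unfolding gg_def using DERIV_add[OF d1 d2] inv_alg[OF tp(1)] inv_alg2[OF tp(2)] by simp
  moreover have "real (Suc m) / (1+t)^(Suc (Suc m)) \<le> real (Suc m) / (1-t)^(Suc (Suc m))"
  proof (rule divide_left_mono)
    show "(1-t)^(Suc (Suc m)) \<le> (1+t)^(Suc (Suc m))" using tp t assms by (intro power_mono) auto
  qed (use tp in auto)
  ultimately show "\<exists>y. (gg m has_real_derivative y) (at t) \<and> 0 \<le> y"
    by (intro exI conjI) auto
qed

lemma sym_int: fixes f :: "real \<Rightarrow> real" shows "integral {-1..1} f = integral {-1..1} (\<lambda>y. f (-y::real))"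
  using Henstock_Kurzweil_Integration.integral_reflect_real[of 1 "-1" f] by simp

lemma BB_scaled:
  assumes z: "z > 1"
  shows "2 * (z^(Suc m) * BB m z) = integral {-1..1} (\<lambda>y. (1-y^2)^m * gg m (y/z))"
proof -
  define K where "K y = (1-y^2)^m * (z/(y+z))^(Suc m)" for y
  have cK: "continuous_on {-1..1} K" unfolding K_def
    by (intro continuous_intros) (use closed_facts[OF _ z] in fastforce)
  have cK': "continuous_on {-1..1} (\<lambda>y. K (-y))" unfolding K_def
    by (intro continuous_intros) (use closed_facts[OF _ z] in fastforce)
  have "z^(Suc m) * BB m z = integral {-1..1} (\<lambda>y. z^(Suc m) * ((1-y^2)^m / (y+z)^(Suc m)))"
    unfolding BB_def Suc_eq_plus1 by (rule integral_mult_right[symmetric])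
  also have "\<dots> = integral {-1..1} K"
    unfolding K_def by (rule integral_cong) (simp add: power_divide)
  finally have e1: "z^(Suc m) * BB m z = integral {-1..1} K" .
  have "2 * integral {-1..1} K = integral {-1..1} K + integral {-1..1} (\<lambda>y. K (-y))"
    using sym_int[of K] by simp
  also have "\<dots> = integral {-1..1} (\<lambda>y. K y + K (-y))"
    by (rule integral_add[symmetric]) (use cK cK' integrable_continuous_interval in auto)
  also have "\<dots> = integral {-1..1} (\<lambda>y. (1-y^2)^m * gg m (y/z))"
  proof (rule integral_cong)
    fix y :: real assume y: "y \<in> {-1..1}"
    have p: "y + z > 0" "-y + z > 0" using y z by auto
    have a: "z/(y+z) = inverse (1 + y/z)" "z/(-y+z) = inverse (1 - y/z)"
      using p z by (auto simp: field_simps)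
    show "K y + K (-y) = (1-y^2)^m * gg m (y/z)"
      unfolding K_def gg_def a by (simp add: power_inverse distrib_left del: power_Suc)
  qed
  finally show ?thesis using e1 by simp
qed

lemma scaled_mono:
  assumes c: "c > 1" and cz: "c \<le> z"
  shows "z^(Suc m) * BB m z \<le> c^(Suc m) * BB m c"
proof -
  have z: "z > 1" using c cz by simp
  have ci: "continuous_on {-1..1} (\<lambda>y. (1-y^2)^m * gg m (y/w))" if w: "w > 1" for w
  proof -
    have pos: "1 + x/w \<noteq> 0 \<and> 1 - x/w \<noteq> 0" if x: "x \<in> {-1..1}" for x
    proof -
      have "\<bar>x/w\<bar> < 1" using x w by (auto simp: field_simps)
      then have "-1 < x/w" "x/w < 1" using abs_less_iff[of "x/w" 1] by auto
      then show ?thesis by linarith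
    qed
    show ?thesis unfolding gg_def
      by (intro continuous_intros) (use pos w in auto)
  qed
  have "integral {-1..1} (\<lambda>y. (1-y^2)^m * gg m (y/z)) \<le> integral {-1..1} (\<lambda>y. (1-y^2)^m * gg m (y/c))"
  proof (rule integral_le)
    fix y :: real assume y: "y \<in> {-1..1}"
    have "gg m (y/z) = gg m (\<bar>y\<bar>/z)" "gg m (y/c) = gg m (\<bar>y\<bar>/c)"
      using z c gg_even[of m "y/z"] gg_even[of m "y/c"] by (auto simp: abs_if)
    moreover have "gg m (\<bar>y\<bar>/z) \<le> gg m (\<bar>y\<bar>/c)"
    proof (rule gg_mono)
      show "0 \<le> \<bar>y\<bar>/z" using z by simp
      show "\<bar>y\<bar>/z \<le> \<bar>y\<bar>/c" using z c cz by (intro divide_left_mono) auto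
      show "\<bar>y\<bar>/c < 1" using y c by (auto simp: field_simps)
    qed
    moreover have "(1-y^2)^m \<ge> 0" using closed_facts[OF y z] by simp
    ultimately show "(1-y^2)^m * gg m (y/z) \<le> (1-y^2)^m * gg m (y/c)"
      by (simp add: mult_left_mono)
  qed (use ci[OF z] ci[OF c] integrable_continuous_interval in auto)
  then show ?thesis using BB_scaled[OF z, of m] BB_scaled[OF c, of m] by simp
qed

definition kk :: "real \<Rightarrow> real" where "kk u = u^3 - 2*u + 2 * arctan u"

lemma kk_deriv: "(kk has_real_derivative (3*u^2 - 2 + 2 * inverse (1 + u^2))) (at u)"
  unfolding kk_def
  by (auto intro!: derivative_eq_intros DERIV_arctan[THEN DERIV_chain2] simp: power2_eq_square)

lemma kk_deriv_val: "3*u^2 - 2 + 2 * inverse (1 + u^2) = (3*u^4 + u^2) / (1 + u^2)" for u :: real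
proof -
  have "1 + u^2 > 0" by (simp add: add_pos_nonneg)
  then show ?thesis by (simp add: field_simps)
qed

lemma kk_pos: "u > 0 \<Longrightarrow> kk u > 0"
proof -
  assume u: "u > 0"
  have d: "\<exists>y. (kk has_real_derivative y) (at x) \<and> y \<ge> 0" for x
  proof -
    have "(3*x^4 + x^2) / (1 + x^2) \<ge> 0" by (simp add: add_nonneg_nonneg add_pos_nonneg)
    then show ?thesis using kk_deriv[of x] kk_deriv_val[of x] by auto
  qed
  have "kk 0 \<le> kk (u/2)"
    by (rule DERIV_nonneg_imp_nondecreasing[of 0 "u/2"]) (use u d in auto)
  moreover have "kk (u/2) < kk u"
  proof -
    have dpos: "\<exists>y. (kk has_real_derivative y) (at x) \<and> y > 0" if x: "u/2 \<le> x" "x \<le> u" for x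
    proof -
      have "x > 0" using u x by simp
      then have "(3*x^4 + x^2) / (1 + x^2) > 0" by (simp add: add_pos_nonneg)
      then show ?thesis using kk_deriv[of x] kk_deriv_val[of x] by auto
    qed
    show ?thesis using DERIV_pos_imp_increasing[of "u/2" u kk] dpos u by auto
  qed
  ultimately show ?thesis by (simp add: kk_def)
qed

definition GG :: "real \<Rightarrow> real" where "GG u = (1 + inverse (u^2)) * (u - arctan u)"

lemma GG_deriv: "u \<noteq> 0 \<Longrightarrow> (GG has_real_derivative kk u / u^3) (at u)"
proof -
  assume u: "u \<noteq> 0"
  have d1: "((\<lambda>u. 1 + inverse (u^2)) has_real_derivative
      (0 + - (inverse (u^2) * (real 2 * (1 * u^(2 - Suc 0))) * inverse (u^2)))) (at u)"
    by (rule DERIV_add[OF DERIV_const DERIV_inverse'[OF DERIV_power[OF DERIV_ident]]]) (use u in simp)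
  have d2: "((\<lambda>u. u - arctan u) has_real_derivative (1 - inverse (1 + u^2))) (at u)"
    by (rule DERIV_diff[OF DERIV_ident DERIV_arctan])
  have "(GG has_real_derivative
      (1 + inverse (u^2)) * (1 - inverse (1 + u^2))
        + (0 + - (inverse (u^2) * (real 2 * (1 * u^(2 - Suc 0))) * inverse (u^2))) * (u - arctan u)) (at u)"
    unfolding GG_def by (rule DERIV_mult'[OF d1 d2])
  moreover have "(1 + inverse (u^2)) * (1 - inverse (1 + u^2))
        + (0 + - (inverse (u^2) * (real 2 * (1 * u^(2 - Suc 0))) * inverse (u^2))) * (u - arctan u) = kk u / u^3"
  proof -
    have "1 + u^2 > 0" by (simp add: add_pos_nonneg)
    have nz: "u * u + u * (u * (u * u)) \<noteq> 0"
    proof -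
      have "u * u + u * (u * (u * u)) = (u*u)*(1+u*u)" by algebra
      moreover have "u*u > 0" using u by (metis not_real_square_gt_zero)
      moreover have "1 + u*u > 0" by (simp add: add_pos_nonneg)
      ultimately show ?thesis by (metis mult_pos_pos less_irrefl)
    qed
    then show ?thesis using u \<open>1 + u^2 > 0\<close> unfolding kk_def
      by (simp add: field_simps power2_eq_square power3_eq_cube) (simp add: algebra_simps)?
  qed
  ultimately show ?thesis by simp
qed

lemma GG_strict:
  assumes u: "0 < u1" "u1 < u2" shows "GG u1 < GG u2"
proof (rule DERIV_pos_imp_increasing[OF u(2)])
  fix x assume "u1 \<le> x"
  then have x: "x > 0" using u by simp
  show "\<exists>y. (GG has_real_derivative y) (at x) \<and> y > 0"
    using GG_deriv[of x] kk_pos[OF x] x by (intro exI[of _ "kk x / x^3"]) auto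
qed

lemma Lambda_GG:
  assumes m: "m > 0"
  shows "Lambda m = 2 / pi * GG (1 / sqrt (m * (m+2)))"
proof -
  define u where "u = 1 / sqrt (m * (m+2))"
  have mm: "m * (m+2) > 0" using m by simp
  have sq: "sqrt (m*(m+2)) > 0" using mm by simp
  have u2: "u^2 = 1 / (m*(m+2))" unfolding u_def using mm by (simp add: power_divide)
  have e1: "(m+1)^2 = 1 + inverse (u^2)" unfolding u2 by (simp add: power2_eq_square algebra_simps)
  have x: "-1 < 1/(m+1)" "1/(m+1) < 1" using m by (auto simp: field_simps)
  have d: "(m+1)^2 \<noteq> 0" using m by simp
  have "1 - (1/(m+1))^2 = ((m+1)^2 - 1)/(m+1)^2" using d by (simp add: power_divide diff_divide_distrib)
  also have "(m+1)^2 - 1 = m*(m+2)" by (simp add: power2_eq_square algebra_simps)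
  finally have "1 - (1/(m+1))^2 = (m*(m+2)) / (m+1)^2" .
  then have "sqrt (1 - (1/(m+1))^2) = sqrt (m*(m+2)) / (m+1)" using m by (simp add: real_sqrt_divide)
  then have "(1/(m+1)) / sqrt (1 - (1/(m+1))^2) = u" unfolding u_def using m sq by (simp add: field_simps)
  then have e2: "arcsin (1/(m+1)) = arctan u" using arcsin_arctan[OF x] by simp
  show ?thesis unfolding Lambda_def GG_def e1 e2 u_def[symmetric] by simp
qed

lemma Lambda_strict: "0 < m1 \<Longrightarrow> m1 < m2 \<Longrightarrow> Lambda m2 < Lambda m1"
proof -
  assume m: "0 < m1" "m1 < m2"
  have "m1 * (m1+2) < m2 * (m2+2)" using m by (intro mult_strict_mono) auto
  then have "sqrt (m1 * (m1+2)) < sqrt (m2 * (m2+2))" by simp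
  moreover have "0 < sqrt (m1 * (m1+2))" using m by simp
  ultimately have "1 / sqrt (m2 * (m2+2)) < 1 / sqrt (m1 * (m1+2))"
    by (intro divide_strict_left_mono) auto
  moreover have "0 < 1 / sqrt (m2 * (m2+2))" using m by simp
  ultimately have "GG (1 / sqrt (m2 * (m2+2))) < GG (1 / sqrt (m1 * (m1+2)))" by (intro GG_strict)
  then have "2 / pi * GG (1 / sqrt (m2 * (m2+2))) < 2 / pi * GG (1 / sqrt (m1 * (m1+2)))"
    using pi_gt_zero by (intro mult_strict_left_mono) auto
  then show ?thesis using Lambda_GG[of m1] Lambda_GG[of m2] m by simp
qed

lemma Lambda_small: "Lambda (1/40) > 1"
proof -
  have s: "sqrt ((1/40) * (1/40 + 2)) = 9/40"
    by (rule real_sqrt_unique) (simp_all add: power2_eq_square)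
  have a: "arcsin (1 / (1/40 + 1)) \<le> pi/2" using arcsin_bounded[of "1 / (1/40 + 1)"] by simp
  have p: "pi < 4" "pi > 0" using pi_less_4 pi_gt_zero by auto
  have "Lambda (1/40) = 2/pi * (1681/1600) * (40/9 - arcsin (1 / (1/40 + 1)))"
    unfolding Lambda_def s by (simp add: power2_eq_square)
  also have "\<dots> \<ge> 2/pi * (1681/1600) * (40/9 - pi/2)"
    using a p by (intro mult_left_mono) auto
  finally have L: "Lambda (1/40) \<ge> 2/pi * (1681/1600) * (40/9 - pi/2)" .
  have E1: "2/pi * (1681/1600) * (40/9 - pi/2) = (1681/1600) * (80/(9*pi) - 1)"
    using p by (simp add: field_simps)
  have "80/(9*pi) > 20/9" using p by (simp add: field_simps)
  then have E2: "(1681/1600) * (80/(9*pi) - 1) > (1681/1600) * (11/9::real)"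
    by (intro mult_strict_left_mono) auto
  from E1 E2 have "2/pi * (1681/1600) * (40/9 - pi/2) > 1" by linarith
  then show ?thesis using L by linarith
qed

lemma Lambda_one: "Lambda 1 < 1"
proof -
  have s3: "sqrt 3 > 17/10" by (rule real_less_rsqrt) (simp add: power2_eq_square)
  have p: "pi > 3" using pi_gt3 by simp
  have "Lambda 1 = 2/pi * 4 * (1 / sqrt 3 - pi/6)"
    unfolding Lambda_def by (simp add: arcsin_one_half)
  also have "\<dots> = 8 / (pi * sqrt 3) - 4/3" using p s3 by (simp add: field_simps)
  also have "\<dots> < 1"
  proof -
    have "pi * sqrt 3 > 3 * (17/10)" using p s3 by (intro mult_strict_mono) auto
    then have "8 / (pi * sqrt 3) < 8 / (3 * (17/10))" by (intro divide_strict_left_mono) auto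
    then show ?thesis by simp
  qed
  finally show ?thesis .
qed

lemma Lambda_cont: "continuous_on {1/40..1} Lambda"
proof -
  have pos: "x \<in> {1/40..1} \<Longrightarrow> x * (x+2) > 0" for x :: real by auto
  have bd: "x \<in> {1/40..1} \<Longrightarrow> -1 \<le> 1/(x+1) \<and> 1/(x+1) \<le> 1" for x :: real by (auto simp: field_simps)
  show ?thesis unfolding Lambda_def
    by (intro continuous_intros) (use pos bd in force)+
qed

lemma mstar_pos: "mstar > 0 \<and> Lambda mstar = 1"
proof -
  obtain m where m: "1/40 \<le> m" "m \<le> 1" "Lambda m = 1"
    using IVT2'[of Lambda 1 1 "1/40"] Lambda_small Lambda_one Lambda_cont by force
  have "\<exists>!m. m > 0 \<and> Lambda m = 1"
  proof (rule ex1I[of _ m])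
    show "m > 0 \<and> Lambda m = 1" using m by simp
    fix m' assume m': "m' > 0 \<and> Lambda m' = 1"
    show "m' = m"
    proof (rule ccontr)
      assume "m' \<noteq> m"
      then consider "m' < m" | "m < m'" by linarith
      then show False using Lambda_strict[of m' m] Lambda_strict[of m m'] m m' by (cases) auto
    qed
  qed
  then show ?thesis unfolding mstar_def by (rule theI')
qed

definition Fk :: "nat \<Rightarrow> nat \<Rightarrow> real \<Rightarrow> real" where
  "Fk l k z = integral {-1..1} (\<lambda>y. legendre l y / (y+z)^(k+1))"

lemma cont_leg: "continuous_on S (legendre l)"
  unfolding legendre_def by (intro continuous_intros)

lemma Fk_deriv:
  assumes x: "x > 1"
  shows "(Fk l k has_real_derivative (-(real k + 1)) * Fk l (Suc k) x) (at x)"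
proof -
  define fx where "fx z y = - ((real k + 1) * (legendre l y / (y+z)^(k+2)))" for z y :: real
  have "((\<lambda>z. integral (cbox (-1) 1) (\<lambda>y. legendre l y / (y+z)^(k+1))) has_field_derivative
        integral (cbox (-1) 1) (fx x)) (at x within {1<..})"
  proof (rule leibniz_rule_field_derivative[where f = "\<lambda>z y. legendre l y / (y+z)^(k+1)"])
    fix z y :: real assume z: "z \<in> {1<..}" and y: "y \<in> cbox (-1) 1"
    have ne: "y + z \<noteq> 0" using z y by auto
    have dz: "((\<lambda>z. y + z) has_real_derivative 1) (at z)" by (auto intro!: derivative_eq_intros)
    have "((\<lambda>z. legendre l y / (y+z)^(k+1)) has_real_derivative
        (0 * (y+z)^(k+1) - legendre l y * (of_nat (k+1) * (1 * (y+z)^(k+1 - Suc 0))))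
          / ((y+z)^(k+1) * (y+z)^(k+1))) (at z)"
      by (rule DERIV_divide[OF DERIV_const DERIV_power[OF dz]]) (use ne in simp)
    moreover have "(0 * (y+z)^(k+1) - legendre l y * (of_nat (k+1) * (1 * (y+z)^(k+1 - Suc 0))))
          / ((y+z)^(k+1) * (y+z)^(k+1)) = fx z y"
    proof -
      have q: "(0 * (y+z)^(k+1) - legendre l y * (of_nat (k+1) * (1 * (y+z)^(k+1 - Suc 0))))
          / ((y+z)^(k+1) * (y+z)^(k+1)) = 0 / (y+z)^(k+1) - (real k + 1) * (legendre l y / (y+z)^(k+2))"
        by (rule quot_alg[OF ne])
      show ?thesis unfolding fx_def q by (simp only: div_0 diff_0)
    qed
    ultimately show "((\<lambda>z. legendre l y / (y+z)^(k+1)) has_field_derivative fx z y) (at z within {1<..})"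
      using has_field_derivative_at_within by simp
  next
    fix z :: real assume z: "z \<in> {1<..}"
    show "(\<lambda>y. legendre l y / (y+z)^(k+1)) integrable_on cbox (-1) 1"
      by (rule integrable_continuous) (use z in \<open>auto intro!: continuous_intros cont_leg[THEN continuous_on_subset]\<close>)
  next
    have pos: "\<forall>p\<in>{1<..} \<times> cbox (-1) (1::real). snd p + fst p \<noteq> (0::real)" by (auto simp: box_real)
    show "continuous_on ({1<..} \<times> cbox (-1) 1) (\<lambda>(z, y). fx z y)"
      unfolding fx_def split_beta
      by (intro continuous_intros continuous_on_compose2[OF cont_leg[of UNIV l]]) (use pos in auto)
  qed (use x in auto)
  then have "(Fk l k has_real_derivative integral {-1..1} (fx x)) (at x)"
    unfolding Fk_def using x by (simp add: at_within_open[of x "{1<..}"])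
  moreover have "integral {-1..1} (fx x) = (-(real k + 1)) * Fk l (Suc k) x"
  proof -
    have "integral {-1..1} (fx x) = - ((real k + 1) * integral {-1..1} (\<lambda>y. legendre l y / (y+x)^(k+2)))"
      unfolding fx_def by (simp only: integral_neg integral_mult_right)
    also have "(\<lambda>y. legendre l y / (y+x)^(k+2)) = (\<lambda>y. legendre l y / (y+x)^(Suc k+1))" by simp
    finally show ?thesis unfolding Fk_def by (simp add: algebra_simps)
  qed
  ultimately show ?thesis by simp
qed

lemma deriv_phi:
  "\<forall>x>1. (deriv ^^ k) (phi l) x = (-1)^k * fact k * Fk l k x"
proof (induction k)
  case 0 then show ?case by (simp add: phi_def Fk_def)
next
  case (Suc k)
  show ?case
  proof (intro allI impI)
    fix x :: real assume x: "x > 1"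
    have d: "((\<lambda>z. (-1)^k * fact k * Fk l k z) has_real_derivative
          (-1)^k * fact k * ((-(real k + 1)) * Fk l (Suc k) x)) (at x)"
      by (rule DERIV_cmult[OF Fk_deriv[OF x]])
    have "(((deriv ^^ k) (phi l)) has_real_derivative
          (-1)^k * fact k * ((-(real k + 1)) * Fk l (Suc k) x)) (at x)"
      by (rule has_field_derivative_transform_within_open[OF d, of "{1<..}"]) (use x Suc.IH in auto)
    then have "deriv ((deriv ^^ k) (phi l)) x = (-1)^k * fact k * ((-(real k + 1)) * Fk l (Suc k) x)"
      by (rule DERIV_imp_deriv)
    then show "(deriv ^^ Suc k) (phi l) x = (-1)^Suc k * fact (Suc k) * Fk l (Suc k) x"
      by (simp add: algebra_simps)
  qed
qed

lemma smooth_phi: "smooth_on {1<..} (phi l)"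
  unfolding smooth_on_def
proof (intro allI ballI)
  fix k and x :: real assume x: "x \<in> {1<..}"
  have d: "((\<lambda>z. (-1)^k * fact k * Fk l k z) has_real_derivative
        (-1)^k * fact k * ((-(real k + 1)) * Fk l (Suc k) x)) (at x)"
    by (rule DERIV_cmult[OF Fk_deriv]) (use x in simp)
  have "(((deriv ^^ k) (phi l)) has_real_derivative
        (-1)^k * fact k * ((-(real k + 1)) * Fk l (Suc k) x)) (at x)"
    by (rule has_field_derivative_transform_within_open[OF d, of "{1<..}"]) (use x deriv_phi in auto)
  moreover have "(deriv ^^ Suc k) (phi l) x = (-1)^k * fact k * ((-(real k + 1)) * Fk l (Suc k) x)"
    using deriv_phi[of "Suc k" l] x by (simp add: algebra_simps)
  ultimately show "((deriv ^^ k) (phi l) has_real_derivative (deriv ^^ Suc k) (phi l) x) (at x)"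
    by simp
qed

lemma Anorm_eq: "Anorm l = II l / 2^l"
  unfolding Anorm_def II_def by (simp add: powr_minus powr_realpow divide_inverse mult.commute)

lemma abs_phi: "odd l \<Longrightarrow> z > 1 \<Longrightarrow> \<bar>phi l z\<bar> = BB l z / 2^l"
  using phi_BB[of z l] BB_pos[of z l] by simp

lemma part1: "z > 1 \<Longrightarrow> odd l \<Longrightarrow> phi l z < phi (l + 2) z \<and> phi l z < 0"
proof -
  assume z: "z > 1" and l: "odd l"
  have l2: "odd (l+2)" using l by simp
  have "BB (l+2) z / 4 / 2^l < BB l z / 2^l"
    by (rule divide_strict_right_mono[OF BB_step[OF z]]) simp
  moreover have "BB (l+2) z / 2^(l+2) = BB (l+2) z / 4 / 2^l" by (simp add: power_add)
  ultimately have "phi l z < phi (l + 2) z" using phi_BB[OF z l] phi_BB[OF z l2] by simp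
  moreover have "phi l z < 0" using phi_BB[OF z l] BB_pos[OF z, of l] by simp
  ultimately show ?thesis by simp
qed

lemma part_asym:
  assumes l: "odd l"
  shows "phi l \<sim>[at_top] (\<lambda>z. - Anorm l / (z - 1) ^ (l + 1))"
proof (rule asymp_equivI')
  have I: "II l > 0" by (rule II_pos)
  have r: "phi l z / (- Anorm l / (z - 1) ^ (l + 1)) = BB l z * (z-1)^(l+1) / II l" if z: "z > 1" for z
  proof -
    have "(z-1)^(l+1) > 0" using z by simp
    then show ?thesis unfolding phi_BB[OF z l] Anorm_eq using I by (simp add: field_simps)
  qed
  have up: "BB l z * (z-1)^(l+1) / II l \<le> 1" if z: "z > 1" for z
  proof -
    have "BB l z \<le> II l / (z-1)^(l+1)" by (rule BB_upper[OF z])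
    then show ?thesis using I z by (simp add: field_simps)
  qed
  have lo: "((z-1)/(z+1))^(l+1) \<le> BB l z * (z-1)^(l+1) / II l" if z: "z > 1" for z
  proof -
    have "II l / (z+1)^(l+1) \<le> BB l z" by (rule BB_lower[OF z])
    then have "II l / (z+1)^(l+1) * ((z-1)^(l+1) / II l) \<le> BB l z * ((z-1)^(l+1) / II l)"
      using I z by (intro mult_right_mono) auto
    moreover have "II l / (z+1)^(l+1) * ((z-1)^(l+1) / II l) = ((z-1)/(z+1))^(l+1)"
      using I z by (simp add: power_divide)
    ultimately show ?thesis by simp
  qed
  have lim: "((\<lambda>z::real. ((z-1)/(z+1))^(l+1)) \<longlongrightarrow> 1) at_top" by real_asymp
  show "((\<lambda>z. phi l z / (- Anorm l / (z - 1) ^ (l + 1))) \<longlongrightarrow> 1) at_top"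
  proof (rule tendsto_sandwich[OF _ _ lim tendsto_const])
    show "\<forall>\<^sub>F z in at_top. ((z-1)/(z+1))^(l+1) \<le> phi l z / (- Anorm l / (z - 1) ^ (l + 1))"
      using eventually_gt_at_top[of 1]
    proof eventually_elim
      case (elim z) then show ?case unfolding r[OF elim] by (rule lo)
    qed
    show "\<forall>\<^sub>F z in at_top. phi l z / (- Anorm l / (z - 1) ^ (l + 1)) \<le> 1"
      using eventually_gt_at_top[of 1]
    proof eventually_elim
      case (elim z) then show ?case unfolding r[OF elim] by (rule up)
    qed
  qed
qed

lemma part_upper: "odd l \<Longrightarrow> z > 1 \<Longrightarrow> \<bar>phi l z\<bar> \<le> Anorm l / (z - 1) ^ (l + 1)"
proof -
  assume l: "odd l" and z: "z > 1"
  have "BB l z / 2^l \<le> II l / (z-1)^(l+1) / 2^l"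
    by (rule divide_right_mono[OF BB_upper[OF z]]) simp
  moreover have "Anorm l / (z-1)^(l+1) = II l / (z-1)^(l+1) / 2^l"
    unfolding Anorm_eq by (simp add: ac_simps)
  ultimately show ?thesis using abs_phi[OF l z] by simp
qed

lemma part_C:
  assumes l: "odd l" and z: "z > 1 + mstar"
  shows "\<bar>phi l z\<bar> \<le> Cconst l * Anorm l / z ^ (l + 1)"
proof -
  define c where "c = 1 + mstar"
  have c: "c > 1" unfolding c_def using mstar_pos by simp
  have zc: "c \<le> z" "z > 1" using z c unfolding c_def by auto
  have I: "II l > 0" by (rule II_pos)
  have "integral {-1..1} (\<lambda>y. - legendre l y / (y + 1 + mstar)) = - phi l c"
    unfolding phi_def c_def by (simp add: add.assoc)
  then have "integral {-1..1} (\<lambda>y. - legendre l y / (y + 1 + mstar)) = BB l c / 2^l"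
    using phi_BB[OF c l] by simp
  then have CC: "Cconst l = c^(l+1) * BB l c / II l"
    unfolding Cconst_def II_def[symmetric] c_def[symmetric] by simp
  have "Cconst l * Anorm l / z ^ (l + 1) = c^(l+1) * BB l c / z^(l+1) / 2^l"
    unfolding CC Anorm_eq using I by (simp add: field_simps)
  moreover have "BB l z \<le> c^(l+1) * BB l c / z^(l+1)"
    using scaled_mono[OF c zc(1), of l] zc by (simp add: field_simps)
  then have "BB l z / 2^l \<le> c^(l+1) * BB l c / z^(l+1) / 2^l"
    by (rule divide_right_mono) simp
  ultimately show ?thesis using abs_phi[OF l zc(2)] by simp
qed

theorem lemma9p3:
  shows
  "(\<forall>z>1. \<forall>l. odd l \<longrightarrow> phi l z < phi (l + 2) z \<and> phi l z < 0)
   \<and> (\<forall>l. odd l \<longrightarrow>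
        smooth_on {1<..} (phi l)
      \<and> strict_mono_on {1<..} (phi l)
      \<and> (phi l \<sim>[at_top] (\<lambda>z. - Anorm l / (z - 1) ^ (l + 1))))
   \<and> (\<forall>l. odd l \<longrightarrow>
        (\<forall>z>1. \<bar>phi l z\<bar> \<le> Anorm l / (z - 1) ^ (l + 1))
      \<and> (\<forall>z>1 + mstar. \<bar>phi l z\<bar> \<le> Cconst l * Anorm l / z ^ (l + 1)))"
proof (intro conjI allI impI)
  fix l :: nat assume l: "odd l"
  show "strict_mono_on {1<..} (phi l)"
  proof (rule strict_mono_onI)
    fix r s :: real assume "r \<in> {1<..}" "s \<in> {1<..}" "r < s"
    then show "phi l r < phi l s"
      using BB_mono[of r s l] phi_BB[of r l] phi_BB[of s l] l by (simp add: divide_strict_right_mono)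
  qed
qed (use part1 smooth_phi part_asym part_upper part_C in auto)

end
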